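(* Let $(A,\succ,\prec)$ be an anti-pre-Novikov algebra, $s\in A\otimes A$ define a factorizable anti-pre-Novikov bialgebra $(A,\succ,\prec,\Delta_{\succ,s},\Delta_{\prec,s})$, and $\lambda\in k$ nonzero; let $(A,\succ,\prec,P,\omega)$ be the corresponding quadratic Rota–Baxter anti-pre-Novikov algebra of weight $\lambda$, i.e. $\omega(x,y)=-\lambda\langle T_{s+\tau(s)}^{-1}(x),y\rangle$ and $P=T_s\omega^\sharp$. Then $(A,\succ,\prec,\Delta_{\succ,\tau(s)},\Delta_{\prec,\tau(s)})$ is a factorizable anti-pre-Novikov bialgebra, and its corresponding quadratic Rota–Baxter anti-pre-Novikov algebra of weight $\lambda$ (with $\omega'(x,y)=-\lambda\langle T_{\tau(s)+s}^{-1}(x),y\rangle$ and $P'=T_{\tau(s)}\omega'^\sharp$) is $(A,\succ,\prec,-\lambda I-P,\omega)$.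
   Context: $A$ is finite-dimensional over a field $k$. An anti-pre-Novikov algebra is $(A,\succ,\prec)$ such that with $x\circ y=x\succ y+x\prec y$: $(x\circ y-y\circ x)\succ z=y\succ(x\succ z)-x\succ(y\succ z)$; $x\prec(y\circ z)=(y\succ x)\prec z-(x\prec y)\prec z-y\succ(x\prec z)$; $(x\circ y)\succ z=-(x\succ z)\prec y$; $(x\prec y)\prec z=(x\prec z)\prec y$; $(x\circ y-y\circ x)\prec z=x\succ(y\circ z)-y\succ(x\circ z)$. Notation: $x\odot y=x\succ y+y\prec x$; $L_\ast(x)y=x\ast y$, $R_\ast(x)y=y\ast x$; $L_{\star}=L_{\circ}+R_{\circ}$, $L_{\odot}=L_{\succ}+R_{\prec}$; $\tau$ is the flip; $T_r:A^*\to A$, $\langle T_r(\zeta),\eta\rangle=\langle r,\zeta\otimes\eta\rangle$; for a bilinear form $\omega$, $\omega^\sharp:A\to A^*$, $\langle\omega^\sharp(x),y\rangle=\omega(x,y)$. $r$ is invariant if $(I\otimes L_{\star}(x)-L_{\succ}(x)\otimes I)r=0$ and $(L_{\circ}(x)\otimes I-I\otimes L_{\odot}(x))r=0$ for all $x$. For $s=\sum_i a_i\otimes b_i$ the APN-YBE is $\sum_{i,j}a_i\circ a_j\otimes b_i\otimes b_j+\sum_{i,j}a_j\otimes a_i\otimes(b_i\odot b_j)+\sum_{i,j}a_i\otimes(b_i\prec a_j)\otimes b_j=0$. With $\Delta_{\succ,r}(x)=(I\otimes L_{\star}(x)-L_{\succ}(x)\otimes I)r$, $\Delta_{\prec,r}(x)=(L_{\circ}(x)\otimes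 I-I\otimes L_{\odot}(x))r$, the datum $(A,\succ,\prec,\Delta_{\succ,r},\Delta_{\prec,r})$ is a factorizable anti-pre-Novikov bialgebra when $r$ solves the APN-YBE, $r+\tau(r)$ is invariant, and $T_{r+\tau(r)}$ is a linear isomorphism. A quadratic Rota–Baxter anti-pre-Novikov algebra of weight $\lambda$ is $(A,\succ,\prec,P,\omega)$ with $P(x)\prec P(y)=P(P(x)\prec y+x\prec P(y)+\lambda x\prec y)$, $P(x)\succ P(y)=P(P(x)\succ y+x\succ P(y)+\lambda x\succ y)$, $\omega$ non-degenerate symmetric with $\omega(x\prec y,z)=-\omega(x,z\circ y)$, $\omega(x\succ y,z)=\omega(x\circ z+z\circ x,y)$, and $\omega(P(x),y)+\omega(x,P(y))+\lambda\omega(x,y)=0$. *)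

theory Defs
  imports Main
begin

text \<open>The finite-dimensional algebra A over the field 'k is represented in
coordinates with respect to a basis indexed by the finite type 'i: A = ('i => 'k).
The dual space A* is represented by the same coordinate space, with the natural
pairing. Elements of A (x) A are coefficient arrays 'i => 'i => 'k (coefficient of
e_a (x) e_b), elements of A (x) A (x) A are arrays 'i => 'i => 'i => 'k.\<close>

type_synonym ('i, 'k) vec = "'i \<Rightarrow> 'k"
type_synonym ('i, 'k) ten2 = "'i \<Rightarrow> 'i \<Rightarrow> 'k"
type_synonym ('i, 'k) ten3 = "'i \<Rightarrow> 'i \<Rightarrow> 'i \<Rightarrow> 'k"
type_synonym ('i, 'k) prod = "('i, 'k) vec \<Rightarrow> ('i, 'k) vec \<Rightarrow> ('i, 'k) vec"

definition vadd :: "('i, 'k::field) vec \<Rightarrow> ('i, 'k) vec \<Rightarrow> ('i, 'k) vec" where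
  "vadd x y = (\<lambda>i. x i + y i)"

definition vsmul :: "'k::field \<Rightarrow> ('i, 'k) vec \<Rightarrow> ('i, 'k) vec" where
  "vsmul c x = (\<lambda>i. c * x i)"

definition vsub :: "('i, 'k::field) vec \<Rightarrow> ('i, 'k) vec \<Rightarrow> ('i, 'k) vec" where
  "vsub x y = (\<lambda>i. x i - y i)"

definition bvec :: "'i \<Rightarrow> ('i, 'k::field) vec" where
  "bvec a = (\<lambda>i. if i = a then 1 else 0)"

definition bilinear_op :: "('i, 'k::field) prod \<Rightarrow> bool" where
  "bilinear_op m \<longleftrightarrow>
     (\<forall>x y z. m (vadd x y) z = vadd (m x z) (m y z)) \<and>
     (\<forall>x y z. m x (vadd y z) = vadd (m x y) (m x z)) \<and>
     (\<forall>c x y. m (vsmul c x) y = vsmul c (m x y)) \<and>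
     (\<forall>c x y. m x (vsmul c y) = vsmul c (m x y))"

definition circ :: "('i, 'k::field) prod \<Rightarrow> ('i, 'k) prod \<Rightarrow> ('i, 'k) prod" where
  "circ sc pr x y = vadd (sc x y) (pr x y)"

definition odot :: "('i, 'k::field) prod \<Rightarrow> ('i, 'k) prod \<Rightarrow> ('i, 'k) prod" where
  "odot sc pr x y = vadd (sc x y) (pr y x)"

definition Lstar :: "('i, 'k::field) prod \<Rightarrow> ('i, 'k) prod \<Rightarrow> ('i, 'k) vec \<Rightarrow> ('i, 'k) vec \<Rightarrow> ('i, 'k) vec" where
  "Lstar sc pr x y = vadd (circ sc pr x y) (circ sc pr y x)"

definition Lodot :: "('i, 'k::field) prod \<Rightarrow> ('i, 'k) prod \<Rightarrow> ('i, 'k) vec \<Rightarrow> ('i, 'k) vec \<Rightarrow> ('i, 'k) vec" where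
  "Lodot sc pr x y = odot sc pr x y"

definition anti_pre_novikov :: "('i, 'k::field) prod \<Rightarrow> ('i, 'k) prod \<Rightarrow> bool" where
  "anti_pre_novikov sc pr \<longleftrightarrow>
     (\<forall>x y z. sc (vsub (circ sc pr x y) (circ sc pr y x)) z = vsub (sc y (sc x z)) (sc x (sc y z))) \<and>
     (\<forall>x y z. pr x (circ sc pr y z) = vsub (vsub (pr (sc y x) z) (pr (pr x y) z)) (sc y (pr x z))) \<and>
     (\<forall>x y z. sc (circ sc pr x y) z = vsmul (-1) (pr (sc x z) y)) \<and>
     (\<forall>x y z. pr (pr x y) z = pr (pr x z) y) \<and>
     (\<forall>x y z. pr (vsub (circ sc pr x y) (circ sc pr y x)) z = vsub (sc x (circ sc pr y z)) (sc y (circ sc pr x z)))"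

text \<open>(f (x) g) r for linear maps f, g on A and r in A (x) A.\<close>
definition tapp :: "(('i::finite, 'k::field) vec \<Rightarrow> ('i, 'k) vec) \<Rightarrow> (('i, 'k) vec \<Rightarrow> ('i, 'k) vec)
                    \<Rightarrow> ('i, 'k) ten2 \<Rightarrow> ('i, 'k) ten2" where
  "tapp f g r = (\<lambda>i j. \<Sum>a\<in>UNIV. \<Sum>b\<in>UNIV. r a b * f (bvec a) i * g (bvec b) j)"

definition tflip :: "('i, 'k) ten2 \<Rightarrow> ('i, 'k) ten2" where
  "tflip r = (\<lambda>i j. r j i)"

definition tadd :: "('i, 'k::field) ten2 \<Rightarrow> ('i, 'k) ten2 \<Rightarrow> ('i, 'k) ten2" where
  "tadd r t = (\<lambda>i j. r i j + t i j)"

definition t3 :: "('i, 'k::field) vec \<Rightarrow> ('i, 'k) vec \<Rightarrow> ('i, 'k) vec \<Rightarrow> ('i, 'k) ten3" where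
  "t3 x y z = (\<lambda>p q r. x p * y q * z r)"

definition invariant_tensor :: "('i::finite, 'k::field) prod \<Rightarrow> ('i, 'k) prod \<Rightarrow> ('i, 'k) ten2 \<Rightarrow> bool" where
  "invariant_tensor sc pr r \<longleftrightarrow>
     (\<forall>x. tapp id (Lstar sc pr x) r = tapp (sc x) id r) \<and>
     (\<forall>x. tapp (circ sc pr x) id r = tapp id (Lodot sc pr x) r)"

definition apn_ybe :: "('i::finite, 'k::field) prod \<Rightarrow> ('i, 'k) prod \<Rightarrow> ('i, 'k) ten2 \<Rightarrow> bool" where
  "apn_ybe sc pr s \<longleftrightarrow>
     (\<lambda>p q r. \<Sum>a\<in>UNIV. \<Sum>b\<in>UNIV. \<Sum>c\<in>UNIV. \<Sum>d\<in>UNIV. s a b * s c d *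
        ( t3 (circ sc pr (bvec a) (bvec c)) (bvec b) (bvec d) p q r
        + t3 (bvec c) (bvec a) (odot sc pr (bvec b) (bvec d)) p q r
        + t3 (bvec a) (pr (bvec b) (bvec c)) (bvec d) p q r)) = (\<lambda>p q r. 0)"

definition pairing :: "('i::finite, 'k::field) vec \<Rightarrow> ('i, 'k) vec \<Rightarrow> 'k" where
  "pairing \<zeta> x = (\<Sum>i\<in>UNIV. \<zeta> i * x i)"

text \<open>T_r : A* -> A with <T_r zeta, eta> = <r, zeta (x) eta>.\<close>
definition Tmap :: "('i::finite, 'k::field) ten2 \<Rightarrow> ('i, 'k) vec \<Rightarrow> ('i, 'k) vec" where
  "Tmap r \<zeta> = (\<lambda>b. \<Sum>a\<in>UNIV. \<zeta> a * r a b)"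

definition factorizable :: "('i::finite, 'k::field) prod \<Rightarrow> ('i, 'k) prod \<Rightarrow> ('i, 'k) ten2 \<Rightarrow> bool" where
  "factorizable sc pr r \<longleftrightarrow>
     apn_ybe sc pr r \<and> invariant_tensor sc pr (tadd r (tflip r)) \<and> bij (Tmap (tadd r (tflip r)))"

definition omega_of :: "'k::field \<Rightarrow> ('i::finite, 'k) ten2 \<Rightarrow> ('i, 'k) vec \<Rightarrow> ('i, 'k) vec \<Rightarrow> 'k" where
  "omega_of lam r x y = - lam * pairing (inv (Tmap (tadd r (tflip r))) x) y"

definition sharp :: "(('i::finite, 'k::field) vec \<Rightarrow> ('i, 'k) vec \<Rightarrow> 'k) \<Rightarrow> ('i, 'k) vec \<Rightarrow> ('i, 'k) vec" where
  "sharp \<omega> x = (\<lambda>i. \<omega> x (bvec i))"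

definition P_of :: "'k::field \<Rightarrow> ('i::finite, 'k) ten2 \<Rightarrow> ('i, 'k) vec \<Rightarrow> ('i, 'k) vec" where
  "P_of lam r = Tmap r \<circ> sharp (omega_of lam r)"

end

theory Submission
  imports Defs
begin

lemma mif: "x * (if P then 1 else 0) = (if P then x else (0::'a::semiring_1))"
  "(if P then 1 else 0) * x = (if P then x else (0::'a::semiring_1))"
  "x * (if P then y else 0) = (if P then x * y else (0::'a::semiring_1))"
  "(if P then y else 0) * x = (if P then y * x else (0::'a::semiring_1))" by auto
lemma sif: "(\<Sum>x\<in>A. if P then f x else 0) = (if P then (\<Sum>x\<in>A. f x) else 0)" by auto

definition Yc :: "('i::finite \<Rightarrow> 'i \<Rightarrow> 'i \<Rightarrow> 'k::field) \<Rightarrow> ('i \<Rightarrow> 'i \<Rightarrow> 'i \<Rightarrow> 'k) \<Rightarrow> ('i \<Rightarrow> 'i \<Rightarrow> 'i \<Rightarrow> 'k)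
   \<Rightarrow> ('i \<Rightarrow> 'i \<Rightarrow> 'k) \<Rightarrow> 'i \<Rightarrow> 'i \<Rightarrow> 'i \<Rightarrow> 'k" where
  "Yc C Od R s p q z = (\<Sum>a\<in>UNIV. \<Sum>c\<in>UNIV. s a q * s c z * C a c p)
     + (\<Sum>b\<in>UNIV. \<Sum>d\<in>UNIV. s q b * s p d * Od b d z)
     + (\<Sum>b\<in>UNIV. \<Sum>c\<in>UNIV. s p b * s c z * R b c q)"

lemma bvec_eq: "bvec a p = (if p = a then 1 else 0)" by (simp add: bvec_def)

lemma ybe_iff: "apn_ybe sc pr s \<longleftrightarrow> (\<forall>p q z. Yc (\<lambda>a c p. circ sc pr (bvec a) (bvec c) p)
   (\<lambda>b d z. odot sc pr (bvec b) (bvec d) z) (\<lambda>b c q. pr (bvec b) (bvec c) q) s p q z = 0)"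
proof -
  have "(\<Sum>a\<in>UNIV. \<Sum>b\<in>UNIV. \<Sum>c\<in>UNIV. \<Sum>d\<in>UNIV. s a b * s c d *
        ( t3 (circ sc pr (bvec a) (bvec c)) (bvec b) (bvec d) p q r
        + t3 (bvec c) (bvec a) (odot sc pr (bvec b) (bvec d)) p q r
        + t3 (bvec a) (pr (bvec b) (bvec c)) (bvec d) p q r)) =
     Yc (\<lambda>a c p. circ sc pr (bvec a) (bvec c) p)
   (\<lambda>b d z. odot sc pr (bvec b) (bvec d) z) (\<lambda>b c q. pr (bvec b) (bvec c) q) s p q r" for p q r
    unfolding t3_def Yc_def bvec_eq
    by (simp add: distrib_left sum.distrib mif sif sum.delta sum.delta' cong: if_cong)
  then show ?thesis unfolding apn_ybe_def fun_eq_iff by simp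
qed

lemma key:
  fixes t s :: "'i::finite \<Rightarrow> 'i \<Rightarrow> 'k::field" and S R :: "'i\<Rightarrow>'i\<Rightarrow>'i\<Rightarrow>'k"
  defines "C \<equiv> (\<lambda>a b i. S a b i + R a b i)" and "Od \<equiv> (\<lambda>a b i. S a b i + R b a i)"
  assumes t: "\<And>i j. t i j = s i j + s j i"
    and I1: "\<And>e i j. (\<Sum>b\<in>UNIV. t i b * (C e b j + C b e j)) = (\<Sum>a\<in>UNIV. t a j * S e a i)"
    and I2: "\<And>e i j. (\<Sum>a\<in>UNIV. t a j * C e a i) = (\<Sum>b\<in>UNIV. t i b * Od e b j)"
  shows "Yc C Od R (tflip s) p q z = Yc C Od R s p q z"
proof -
  have ts: "t i j = t j i" for i j using t by (simp add: add.commute)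
  have X2: "(\<Sum>a\<in>UNIV. t a q * C a c p) + (\<Sum>b\<in>UNIV. t p b * R b c q) = 0" for c p q
  proof -
    have a: "(\<Sum>b\<in>UNIV. t q b * (C c b p + C b c p)) - (\<Sum>a\<in>UNIV. t a p * S c a q) = 0" using I1 by simp
    have b: "(\<Sum>a\<in>UNIV. t a q * C c a p) - (\<Sum>b\<in>UNIV. t p b * Od c b q) = 0" using I2 by simp
    have "(\<Sum>a\<in>UNIV. t a q * C a c p) + (\<Sum>b\<in>UNIV. t p b * R b c q)
      - (((\<Sum>b\<in>UNIV. t q b * (C c b p + C b c p)) - (\<Sum>a\<in>UNIV. t a p * S c a q))
       - ((\<Sum>a\<in>UNIV. t a q * C c a p) - (\<Sum>b\<in>UNIV. t p b * Od c b q)))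
      = (\<Sum>x\<in>UNIV. t x q * C x c p + t p x * R x c q - ((t q x * (C c x p + C x c p) - t x p * S c x q)
          - (t x q * C c x p - t p x * Od c x q)))"
      by (simp add: sum.distrib sum_subtractf)
    also have "\<dots> = 0"
      by (rule sum.neutral) (simp add: C_def Od_def ts[of q] ts[of _ p] algebra_simps)
    finally show ?thesis using a b by simp
  qed
  have X3: "(\<Sum>b\<in>UNIV. t q b * Od b d z) + (\<Sum>c\<in>UNIV. t c z * R d c q) = 0" for q d z
  proof -
    have a: "(\<Sum>b\<in>UNIV. t q b * (C d b z + C b d z)) - (\<Sum>a\<in>UNIV. t a z * S d a q) = 0" using I1 by simp
    have b: "(\<Sum>a\<in>UNIV. t a z * C d a q) - (\<Sum>b\<in>UNIV. t q b * Od d b z) = 0" using I2 by simp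
    have "(\<Sum>b\<in>UNIV. t q b * Od b d z) + (\<Sum>c\<in>UNIV. t c z * R d c q)
      - (((\<Sum>a\<in>UNIV. t a z * C d a q) - (\<Sum>b\<in>UNIV. t q b * Od d b z))
       + ((\<Sum>b\<in>UNIV. t q b * (C d b z + C b d z)) - (\<Sum>a\<in>UNIV. t a z * S d a q)))
      = (\<Sum>x\<in>UNIV. t q x * Od x d z + t x z * R d x q - ((t x z * C d x q - t q x * Od d x z)
          + (t q x * (C d x z + C x d z) - t x z * S d x q)))"
      by (simp add: sum.distrib sum_subtractf)
    also have "\<dots> = 0"
      by (rule sum.neutral) (simp add: C_def Od_def algebra_simps)
    finally show ?thesis using a b by simp
  qed
  have X3': "(\<Sum>b\<in>UNIV. t q b * Od b d z) = - (\<Sum>c\<in>UNIV. t c z * R d c q)" for q d z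
    using X3[of q d z] by (simp add: eq_neg_iff_add_eq_0)
  define F where "F u v = (\<Sum>a\<in>UNIV. \<Sum>c\<in>UNIV. u a q * v c z * C a c p)
     + (\<Sum>b\<in>UNIV. \<Sum>d\<in>UNIV. u q b * v p d * Od b d z)
     + (\<Sum>b\<in>UNIV. \<Sum>c\<in>UNIV. u p b * v c z * R b c q)" for u v :: "'i \<Rightarrow> 'i \<Rightarrow> 'k"
  define Yd where "Yd d = (\<Sum>c\<in>UNIV. t c z * R d c q)" for d
  define K where "K a = (\<Sum>d\<in>UNIV. t p d * Od a d z)" for a
  have Ft: "F t w = - (\<Sum>d\<in>UNIV. w p d * Yd d)" for w
  proof -
    have h1: "(\<Sum>a\<in>UNIV. \<Sum>c\<in>UNIV. t a q * w c z * C a c p) = (\<Sum>c\<in>UNIV. w c z * (\<Sum>a\<in>UNIV. t a q * C a c p))"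
      by (subst sum.swap) (simp add: sum_distrib_left ac_simps)
    have h2: "(\<Sum>b\<in>UNIV. \<Sum>d\<in>UNIV. t q b * w p d * Od b d z) = (\<Sum>d\<in>UNIV. w p d * (\<Sum>b\<in>UNIV. t q b * Od b d z))"
      by (subst sum.swap) (simp add: sum_distrib_left ac_simps)
    have h3: "(\<Sum>b\<in>UNIV. \<Sum>c\<in>UNIV. t p b * w c z * R b c q) = (\<Sum>c\<in>UNIV. w c z * (\<Sum>b\<in>UNIV. t p b * R b c q))"
      by (subst sum.swap) (simp add: sum_distrib_left ac_simps)
    have "F t w = (\<Sum>c\<in>UNIV. w c z * ((\<Sum>a\<in>UNIV. t a q * C a c p) + (\<Sum>b\<in>UNIV. t p b * R b c q)))
         + (\<Sum>d\<in>UNIV. w p d * (\<Sum>b\<in>UNIV. t q b * Od b d z))"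
      unfolding F_def h1 h2 h3 by (simp add: distrib_left sum.distrib)
    also have "\<dots> = (\<Sum>d\<in>UNIV. w p d * (- Yd d))"
      unfolding X2 Yd_def X3' by simp
    finally show ?thesis by (simp add: sum_negf)
  qed
  have X1: "(\<Sum>c\<in>UNIV. t c z * C a c p) = K a" for a unfolding K_def by (rule I2)
  have Fw: "F w t = (\<Sum>a\<in>UNIV. w a q * K a) + (\<Sum>b\<in>UNIV. w q b * K b) + (\<Sum>b\<in>UNIV. w p b * Yd b)" for w
  proof -
    have h1: "(\<Sum>a\<in>UNIV. \<Sum>c\<in>UNIV. w a q * t c z * C a c p) = (\<Sum>a\<in>UNIV. w a q * K a)"
      unfolding X1[symmetric] by (simp add: sum_distrib_left ac_simps)
    have h2: "(\<Sum>b\<in>UNIV. \<Sum>d\<in>UNIV. w q b * t p d * Od b d z) = (\<Sum>b\<in>UNIV. w q b * K b)"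
      unfolding K_def by (simp add: sum_distrib_left ac_simps)
    have h3: "(\<Sum>b\<in>UNIV. \<Sum>c\<in>UNIV. w p b * t c z * R b c q) = (\<Sum>b\<in>UNIV. w p b * Yd b)"
      unfolding Yd_def by (simp add: sum_distrib_left ac_simps)
    show ?thesis unfolding F_def h1 h2 h3 ..
  qed
  have L: "(\<Sum>a\<in>UNIV. t a q * K a) = - (\<Sum>d\<in>UNIV. t p d * Yd d)"
  proof -
    have "(\<Sum>a\<in>UNIV. t a q * K a) = (\<Sum>a\<in>UNIV. \<Sum>d\<in>UNIV. t p d * (t q a * Od a d z))"
      unfolding K_def by (simp add: sum_distrib_left ts[of _ q] ac_simps)
    also have "\<dots> = (\<Sum>d\<in>UNIV. t p d * (\<Sum>a\<in>UNIV. t q a * Od a d z))"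
      by (subst sum.swap) (simp add: sum_distrib_left)
    also have "\<dots> = (\<Sum>d\<in>UNIV. t p d * (- Yd d))"
      unfolding Yd_def X3' by simp
    finally show ?thesis by (simp add: sum_negf)
  qed
  have bil: "F (\<lambda>i j. t i j - s i j) (\<lambda>i j. t i j - s i j) = F t t - F t s - F s t + F s s"
    unfolding F_def by (simp add: algebra_simps sum_subtractf sum.distrib)
  have Z: "F t t - F t s - F s t = 0"
  proof -
    have "F t t - F t s - F s t = (\<Sum>x\<in>UNIV. - (t p x * Yd x) + s p x * Yd x - s x q * K x - s q x * K x - s p x * Yd x)"
      unfolding Ft[of t] Ft[of s] Fw[of s] by (simp add: sum.distrib sum_subtractf sum_negf)
    also have "\<dots> = (\<Sum>x\<in>UNIV. - (t p x * Yd x) - t x q * K x)"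
      by (rule sum.cong) (simp_all add: t algebra_simps)
    also have "\<dots> = 0" using L by (simp add: sum_subtractf sum_negf)
    finally show ?thesis .
  qed
  have tf: "tflip s = (\<lambda>i j. t i j - s i j)" by (simp add: fun_eq_iff tflip_def t)
  have "Yc C Od R (tflip s) p q z = F (tflip s) (tflip s)" unfolding Yc_def F_def ..
  also have "\<dots> = F s s" unfolding tf bil using Z by (simp add: algebra_simps)
  also have "\<dots> = Yc C Od R s p q z" unfolding Yc_def F_def ..
  finally show ?thesis .
qed

lemma tapp_coord:
  "tapp f g r i j = (\<Sum>a\<in>UNIV. \<Sum>b\<in>UNIV. r a b * f (bvec a) i * g (bvec b) j)"
  by (simp add: tapp_def)

lemma inv_coord:
  fixes sc pr :: "('i::finite \<Rightarrow> 'k::field) \<Rightarrow> ('i \<Rightarrow> 'k) \<Rightarrow> ('i \<Rightarrow> 'k)"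
  assumes "invariant_tensor sc pr t"
  shows "(\<Sum>b\<in>UNIV. t i b * ((sc (bvec e) (bvec b) j + pr (bvec e) (bvec b) j)
            + (sc (bvec b) (bvec e) j + pr (bvec b) (bvec e) j)))
       = (\<Sum>a\<in>UNIV. t a j * sc (bvec e) (bvec a) i)"
    and "(\<Sum>a\<in>UNIV. t a j * (sc (bvec e) (bvec a) i + pr (bvec e) (bvec a) i))
       = (\<Sum>b\<in>UNIV. t i b * (sc (bvec e) (bvec b) j + pr (bvec b) (bvec e) j))"
proof -
  from assms have A: "tapp id (Lstar sc pr (bvec e)) t i j = tapp (sc (bvec e)) id t i j"
    and B: "tapp (circ sc pr (bvec e)) id t i j = tapp id (Lodot sc pr (bvec e)) t i j"
    unfolding invariant_tensor_def by auto
  have A1: "tapp id (Lstar sc pr (bvec e)) t i j = (\<Sum>b\<in>UNIV. t i b * ((sc (bvec e) (bvec b) j + pr (bvec e) (bvec b) j)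
            + (sc (bvec b) (bvec e) j + pr (bvec b) (bvec e) j)))"
    unfolding tapp_coord Lstar_def circ_def vadd_def id_def bvec_eq
    by (simp add: mif sif sum.delta sum.delta' cong: if_cong)
  have A2: "tapp (sc (bvec e)) id t i j = (\<Sum>a\<in>UNIV. t a j * sc (bvec e) (bvec a) i)"
    unfolding tapp_coord id_def bvec_eq
    by (simp add: mif sif sum.delta sum.delta' cong: if_cong)
  have B1: "tapp (circ sc pr (bvec e)) id t i j = (\<Sum>a\<in>UNIV. t a j * (sc (bvec e) (bvec a) i + pr (bvec e) (bvec a) i))"
    unfolding tapp_coord circ_def vadd_def id_def bvec_eq
    by (simp add: mif sif sum.delta sum.delta' cong: if_cong)
  have B2: "tapp id (Lodot sc pr (bvec e)) t i j = (\<Sum>b\<in>UNIV. t i b * (sc (bvec e) (bvec b) j + pr (bvec b) (bvec e) j))"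
    unfolding tapp_coord Lodot_def odot_def vadd_def id_def bvec_eq
    by (simp add: mif sif sum.delta sum.delta' cong: if_cong)
  show "(\<Sum>b\<in>UNIV. t i b * ((sc (bvec e) (bvec b) j + pr (bvec e) (bvec b) j)
            + (sc (bvec b) (bvec e) j + pr (bvec b) (bvec e) j)))
       = (\<Sum>a\<in>UNIV. t a j * sc (bvec e) (bvec a) i)" using A A1 A2 by simp
  show "(\<Sum>a\<in>UNIV. t a j * (sc (bvec e) (bvec a) i + pr (bvec e) (bvec a) i))
       = (\<Sum>b\<in>UNIV. t i b * (sc (bvec e) (bvec b) j + pr (bvec b) (bvec e) j))" using B B1 B2 by simp
qed

lemma Tmap_add: "Tmap (tadd r u) x = vadd (Tmap r x) (Tmap u x)"
  by (simp add: Tmap_def tadd_def vadd_def fun_eq_iff distrib_left sum.distrib)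

lemma Tmap_smul: "Tmap r (\<lambda>i. c * x i) = (\<lambda>b. c * Tmap r x b)"
  by (simp add: Tmap_def sum_distrib_left fun_eq_iff ac_simps)

theorem mainTheorem19:
  fixes sc pr :: "('i::finite \<Rightarrow> 'k::field) \<Rightarrow> ('i \<Rightarrow> 'k) \<Rightarrow> ('i \<Rightarrow> 'k)"
    and s :: "'i \<Rightarrow> 'i \<Rightarrow> 'k"
    and lam :: 'k
  assumes "bilinear_op sc" and "bilinear_op pr"
    and "anti_pre_novikov sc pr"
    and "factorizable sc pr s"
    and "lam \<noteq> 0"
  shows "factorizable sc pr (tflip s)
    \<and> omega_of lam (tflip s) = omega_of lam s
    \<and> P_of lam (tflip s) = (\<lambda>x. vsub (vsmul (- lam) x) (P_of lam s x))"
proof -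
  have ybe: "apn_ybe sc pr s" and inv: "invariant_tensor sc pr (tadd s (tflip s))"
    and bj: "bij (Tmap (tadd s (tflip s)))"
    using assms(4) unfolding factorizable_def by auto
  have tt: "tadd (tflip s) (tflip (tflip s)) = tadd s (tflip s)"
    by (simp add: tadd_def tflip_def fun_eq_iff add.commute)
  define S where "S = (\<lambda>a b i. sc (bvec a) (bvec b) i)"
  define R where "R = (\<lambda>a b i. pr (bvec a) (bvec b) i)"
  have Ceq: "(\<lambda>a c p. circ sc pr (bvec a) (bvec c) p) = (\<lambda>a b i. S a b i + R a b i)"
    by (simp add: S_def R_def circ_def vadd_def fun_eq_iff)
  have Oeq: "(\<lambda>b d z. odot sc pr (bvec b) (bvec d) z) = (\<lambda>a b i. S a b i + R b a i)"
    by (simp add: S_def R_def odot_def vadd_def fun_eq_iff)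
  have Req: "(\<lambda>b c q. pr (bvec b) (bvec c) q) = R" by (simp add: R_def)
  have ybe': "apn_ybe sc pr (tflip s)"
  proof -
    have "Yc (\<lambda>a b i. S a b i + R a b i) (\<lambda>a b i. S a b i + R b a i) R (tflip s) p q z
        = Yc (\<lambda>a b i. S a b i + R a b i) (\<lambda>a b i. S a b i + R b a i) R s p q z" for p q z
    proof (rule key)
      show "tadd s (tflip s) i j = s i j + s j i" for i j by (simp add: tadd_def tflip_def)
      show "(\<Sum>b\<in>UNIV. tadd s (tflip s) i b * ((S e b j + R e b j) + (S b e j + R b e j)))
          = (\<Sum>a\<in>UNIV. tadd s (tflip s) a j * S e a i)" for e i j
        using inv_coord(1)[OF inv] unfolding S_def R_def .
      show "(\<Sum>a\<in>UNIV. tadd s (tflip s) a j * (S e a i + R e a i))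
          = (\<Sum>b\<in>UNIV. tadd s (tflip s) i b * (S e b j + R b e j))" for e i j
        using inv_coord(2)[OF inv] unfolding S_def R_def .
    qed
    then show ?thesis using ybe unfolding ybe_iff Ceq Oeq Req by simp
  qed
  have om: "omega_of lam (tflip s) = omega_of lam s"
    by (simp add: omega_of_def tt fun_eq_iff)
  have P: "P_of lam (tflip s) x = vsub (vsmul (- lam) x) (P_of lam s x)" for x
  proof -
    define T where "T = Tmap (tadd s (tflip s))"
    define w where "w = sharp (omega_of lam s) x"
    have w: "w = (\<lambda>i. - lam * inv T x i)"
      by (simp add: w_def T_def sharp_def omega_of_def pairing_def bvec_eq mif sum.delta cong: if_cong)
    have "vadd (Tmap s w) (Tmap (tflip s) w) = Tmap (tadd s (tflip s)) w" by (simp add: Tmap_add)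
    also have "\<dots> = (\<lambda>b. - lam * T (inv T x) b)" unfolding w Tmap_smul T_def ..
    also have "\<dots> = vsmul (- lam) x" using bj unfolding T_def
      by (simp add: bij_is_surj surj_f_inv_f vsmul_def)
    finally have e: "vadd (Tmap s w) (Tmap (tflip s) w) = vsmul (- lam) x" .
    have "P_of lam (tflip s) x = Tmap (tflip s) w" by (simp add: P_of_def w_def om)
    also have "\<dots> = vsub (vsmul (- lam) x) (Tmap s w)"
      using e by (simp add: vsub_def vadd_def fun_eq_iff) (metis add_diff_cancel_left')
    also have "\<dots> = vsub (vsmul (- lam) x) (P_of lam s x)" by (simp add: P_of_def w_def)
    finally show ?thesis .
  qed
  show ?thesis
    using ybe' inv bj om P unfolding factorizable_def tt by (simp add: fun_eq_iff)
qed

end
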